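(* Let $0\le\mu\le m$, $\epsilon=2^\mu$, let $\mathbf{r}'=(r'_0,\dots,r'_{2^m-1})\in GF(2^m)^{2^m}$ and let $$\mathbf{S}_1(x)=\sum_{j=0}^{2^m-1} r'_j\frac{s_\mu(x)-s_\mu(\omega_j)}{x-\omega_j}.$$ For $0\le l<2^{m-\mu}$ let $\mathbf{r}'_{l,\epsilon}=(r'_{l\epsilon},r'_{l\epsilon+1},\dots,r'_{l\epsilon+\epsilon-1})$. Then $\mathbf{S}_1(x)=\sum_{j=0}^{\epsilon-1}\sigma_j\bar X_j(x)$, where $$(\sigma_0,\dots,\sigma_{\epsilon-1})=\frac{1}{p_{2^m-2^\mu}}\sum_{l=0}^{2^{m-\mu}-1}\mathrm{IFFT}_{\bar{\mathbb X}}\big(\mathbf{r}'_{l,\epsilon},\mu,\omega_{\epsilon l}\big).$$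
   Context: Fix a basis $\{v_0,\dots,v_{m-1}\}$ of $GF(2^m)$ over $GF(2)$. For $0\le j<2^m$ with binary expansion $j=\sum_{i=0}^{m-1} j_i2^i$, set $\omega_j=\sum_{i=0}^{m-1} j_i v_i$. For $0\le\tau\le m$, $s_\tau(x)=\prod_{j=0}^{2^\tau-1}(x-\omega_j)$. Define $X_j(x)=\prod_{i=0}^{m-1}s_i(x)^{j_i}$, $p_j=\prod_{i=0}^{m-1}s_i(v_i)^{j_i}$ and $\bar X_j(x)=X_j(x)/p_j$; $\bar{\mathbb X}=\{\bar X_0,\dots,\bar X_{2^m-1}\}$ is a basis of polynomials of degree $<2^m$. For $0\le\tau\le m$, $\beta\in GF(2^m)$ and $\mathbf{F}=(F_0,\dots,F_{2^\tau-1})\in GF(2^m)^{2^\tau}$, $\mathrm{IFFT}_{\bar{\mathbb X}}(\mathbf{F},\tau,\beta)$ denotes the coefficient vector $(\bar g_0,\dots,\bar g_{2^\tau-1})$ of the unique polynomial $g(x)=\sum_{j=0}^{2^\tau-1}\bar g_j\bar X_j(x)$ of degree $<2^\tau$ satisfying $g(\omega_j+\beta)=F_j$ for $0\le j<2^\tau$. Fractions $\frac{s_\mu(x)-s_\mu(a)}{x-a}$ denote exact polynomial quotients. *)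

theory Defs
  imports "HOL-Computational_Algebra.Polynomial"
begin

definition bitdig :: "nat \<Rightarrow> nat \<Rightarrow> nat" where
  "bitdig j i = (j div 2 ^ i) mod 2"

definition omega :: "nat \<Rightarrow> (nat \<Rightarrow> 'a::field) \<Rightarrow> nat \<Rightarrow> 'a" where
  "omega m v j = (\<Sum>i<m. of_nat (bitdig j i) * v i)"

text \<open>v_0..v_{m-1} is a basis of the field over GF(2): every element is a unique
  GF(2)-linear combination, i.e. j |-> omega_j is a bijection {0..<2^m} -> field.\<close>
definition is_F2_basis :: "nat \<Rightarrow> (nat \<Rightarrow> 'a::field) \<Rightarrow> bool" where
  "is_F2_basis m v = bij_betw (omega m v) {..<2 ^ m} UNIV"

definition s_poly :: "nat \<Rightarrow> (nat \<Rightarrow> 'a::field) \<Rightarrow> nat \<Rightarrow> 'a poly" where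
  "s_poly m v \<tau> = (\<Prod>j<2 ^ \<tau>. [:- omega m v j, 1:])"

definition X_poly :: "nat \<Rightarrow> (nat \<Rightarrow> 'a::field) \<Rightarrow> nat \<Rightarrow> 'a poly" where
  "X_poly m v j = (\<Prod>i<m. s_poly m v i ^ bitdig j i)"

definition p_const :: "nat \<Rightarrow> (nat \<Rightarrow> 'a::field) \<Rightarrow> nat \<Rightarrow> 'a" where
  "p_const m v j = (\<Prod>i<m. poly (s_poly m v i) (v i) ^ bitdig j i)"

definition Xbar :: "nat \<Rightarrow> (nat \<Rightarrow> 'a::field) \<Rightarrow> nat \<Rightarrow> 'a poly" where
  "Xbar m v j = smult (inverse (p_const m v j)) (X_poly m v j)"

definition IFFT :: "nat \<Rightarrow> (nat \<Rightarrow> 'a::field) \<Rightarrow> (nat \<Rightarrow> 'a) \<Rightarrow> nat \<Rightarrow> 'a \<Rightarrow> nat \<Rightarrow> 'a" where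
  "IFFT m v F \<tau> \<beta> = (THE g. (\<forall>j\<ge>2 ^ \<tau>. g j = 0) \<and>
      (\<forall>j<2 ^ \<tau>. poly (\<Sum>i<2 ^ \<tau>. smult (g i) (Xbar m v i)) (omega m v j + \<beta>) = F j))"

end

theory Submission
  imports Defs
begin


lemma bitdig_lt: "j < 2^\<mu> \<Longrightarrow> \<mu> \<le> i \<Longrightarrow> bitdig j i = 0"
proof -
  assume a: "j < 2^\<mu>" "\<mu> \<le> i"
  have "(2::nat)^\<mu> \<le> 2^i" using a(2) by (intro power_increasing) auto
  hence "j < 2^i" using a(1) by (rule order.strict_trans2[rotated])
  hence "j div 2^i = 0" by (rule div_less)
  thus ?thesis unfolding bitdig_def by (simp only: mod_0)
qed

lemma bitdig_split:
  assumes "j < 2^\<mu>"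
  shows "bitdig (l * 2^\<mu> + j) i = (if i < \<mu> then bitdig j i else bitdig l (i - \<mu>))"
proof (cases "i < \<mu>")
  case True
  from less_imp_Suc_add[OF True] obtain d where "\<mu> = Suc (i + d)" by (elim exE)
  hence d: "\<mu> = i + Suc d" by simp
  have pi: "(2::nat)^i \<noteq> 0" by simp
  have e1: "l * 2^\<mu> + j = j + (2 * (l * 2^d)) * 2^i"
    unfolding d power_add power_Suc by (simp only: ac_simps)
  have "(l * 2^\<mu> + j) div 2^i = (2 * (l * 2^d)) + j div 2^i"
    unfolding e1 using pi by (rule div_mult_self1)
  hence "bitdig (l * 2^\<mu> + j) i = (j div 2^i + 2 * (l * 2^d)) mod 2"
    unfolding bitdig_def by (simp only: add.commute)
  also have "\<dots> = bitdig j i" unfolding bitdig_def by (rule mod_mult_self2)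
  finally have X: "bitdig (l * 2^\<mu> + j) i = bitdig j i" .
  show ?thesis by (simp only: X if_P[OF True])
next
  case False
  hence "\<mu> \<le> i" by simp
  then obtain d where d: "i = \<mu> + d" using le_Suc_ex by blast
  have pm: "(2::nat)^\<mu> \<noteq> 0" by simp
  have "(l * 2^\<mu> + j) div 2^i = ((l * 2^\<mu> + j) div 2^\<mu>) div 2^d"
    unfolding d power_add by (rule div_mult2_eq)
  also have "(l * 2^\<mu> + j) div 2^\<mu> = l + j div 2^\<mu>"
  proof -
    have "(j + l * 2^\<mu>) div 2^\<mu> = l + j div 2^\<mu>" using pm by (rule div_mult_self1)
    thus ?thesis by (simp only: add.commute[of j])
  qed
  also have "j div 2^\<mu> = 0" using assms by (rule div_less)
  finally have "(l * 2^\<mu> + j) div 2^i = l div 2^d" by (simp only: add_0_right)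
  moreover have "i - \<mu> = d" using d by arith
  ultimately show ?thesis unfolding bitdig_def by (simp only: if_not_P[OF False])
qed

lemma bitdig_split0: "bitdig (2^\<mu> * l) i = (if i < \<mu> then 0 else bitdig l (i - \<mu>))"
proof -
  have "bitdig (l * 2^\<mu> + 0) i = (if i < \<mu> then bitdig 0 i else bitdig l (i - \<mu>))"
    by (rule bitdig_split) simp
  moreover have "bitdig 0 i = 0" by (simp only: bitdig_def div_0 mod_0)
  moreover have "2^\<mu> * l = l * 2^\<mu> + (0::nat)" by (simp only: add_0_right mult.commute)
  ultimately show ?thesis by (simp only:)
qed

lemma bitdig_add: "j < 2^\<mu> \<Longrightarrow> bitdig (l * 2^\<mu> + j) i = bitdig (2^\<mu> * l) i + bitdig j i"
  using bitdig_split[of j \<mu> l i] bitdig_split0[of \<mu> l i] bitdig_lt[of j \<mu> i] by auto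

lemma omega_add: "j < 2^\<mu> \<Longrightarrow> omega m v (l * 2^\<mu> + j) = omega m v (2^\<mu> * l) + omega m v j"
  unfolding omega_def by (simp add: bitdig_add sum.distrib distrib_right)

lemma omega_0: "omega m v 0 = 0" by (simp add: omega_def bitdig_def)

lemma bitdig_pow: "bitdig (2^i) k = (if k = i then 1 else 0)"
proof -
  have "bitdig (2^i * 1) k = (if k < i then 0 else bitdig 1 (k - i))" by (rule bitdig_split0)
  moreover have "bitdig 1 n = (if n = 0 then 1 else 0)" for n
  proof (cases n)
    case (Suc d)
    have "(1::nat) < 2^n" using Suc by (intro one_less_power) auto
    hence "(1::nat) div 2^n = 0" by (rule div_less)
    thus ?thesis using Suc by (simp add: bitdig_def)
  qed (simp add: bitdig_def)
  ultimately show ?thesis by auto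
qed

lemma omega_pow: "i < m \<Longrightarrow> j < 2^i \<Longrightarrow> omega m v (2^i + j) = v i + omega m v j"
proof -
  assume a: "i < m" "j < 2^i"
  have "omega m v (1 * 2^i + j) = omega m v (2^i * 1) + omega m v j" using omega_add a by blast
  moreover have "omega m v (2^i * 1) = (\<Sum>ia<m. if ia = i then v ia else 0)"
    unfolding omega_def by (rule sum.cong) (simp_all add: bitdig_pow)
  moreover have "(\<Sum>ia<m. if ia = i then v ia else 0) = v i" using a(1) by simp
  ultimately show ?thesis by simp
qed

lemma bitdig_sum: "(\<Sum>i<m. bitdig j i * 2^i) = j mod 2^m"
proof (induction m)
  case 0 then show ?case by simp
next
  case (Suc m)
  have "j mod 2^Suc m = 2^m * (j div 2^m mod 2) + j mod 2^m"
    by (metis mod_mult2_eq power_Suc2)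
  then show ?case using Suc by (simp add: bitdig_def)
qed

lemma bitdig_ones: "k < n \<Longrightarrow> bitdig (2^n - 1) k = 1"
proof -
  assume kn: "k < n"
  have e: "(2::nat)^n - 1 = (2^(n-k) - 1) * 2^k + (2^k - 1)"
  proof -
    have "(2::nat)^n = 2^(n-k) * 2^k" using kn by (simp add: power_add[symmetric])
    moreover have "(1::nat) \<le> 2^(n-k)" "(1::nat) \<le> 2^k" by simp_all
    ultimately show ?thesis by (simp add: diff_mult_distrib)
  qed
  have "bitdig (2^n - 1) k = bitdig (2^(n-k) - 1) 0"
    unfolding e by (subst bitdig_split) simp_all
  moreover have "odd ((2::nat)^(n-k) - 1)" using kn by simp
  hence "((2::nat)^(n-k) - 1) mod 2 = 1" by (metis odd_iff_mod_2_eq_one)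
  ultimately show ?thesis by (simp add: bitdig_def)
qed

lemma bitdig_block: "\<mu> \<le> m \<Longrightarrow> i < m \<Longrightarrow> bitdig (2^m - 2^\<mu>) i = (if \<mu> \<le> i then 1 else 0)"
proof -
  assume a: "\<mu> \<le> m" "i < m"
  have e: "(2::nat)^m - 2^\<mu> = (2^(m-\<mu>) - 1) * 2^\<mu> + 0"
    using a by (simp add: diff_mult_distrib power_add[symmetric])
  have "bitdig (2^m - 2^\<mu>) i = (if i < \<mu> then bitdig 0 i else bitdig (2^(m-\<mu>) - 1) (i - \<mu>))"
    unfolding e by (rule bitdig_split) simp
  moreover have "bitdig 0 i = 0" by (simp add: bitdig_def)
  moreover have "\<mu> \<le> i \<Longrightarrow> bitdig (2^(m-\<mu>) - 1) (i - \<mu>) = 1"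
    using a by (intro bitdig_ones) linarith
  ultimately show ?thesis by auto
qed

lemma prod_split_add: "(\<Prod>j<(a::nat)+b. f j) = (\<Prod>j<a. f j) * (\<Prod>j<b. f (a+j))"
  by (induction b) (simp_all add: mult.assoc)

lemma sum_ivl_shift: "(\<Sum>j\<in>{(a::nat)..<a+n}. f j) = (\<Sum>i<n. f (a+i) :: 'b::comm_monoid_add)"
  by (induction n) simp_all

lemma prod_ivl_shift: "(\<Prod>j\<in>{(a::nat)..<a+n}. f j) = (\<Prod>i<n. f (a+i) :: 'b::comm_monoid_mult)"
  by (induction n) simp_all

lemma coeff_const_pos: "0 < k \<Longrightarrow> coeff [:c:] k = 0"
  by (cases k) simp_all

definition Qp :: "nat \<Rightarrow> (nat \<Rightarrow> 'a::field) \<Rightarrow> nat \<Rightarrow> 'a \<Rightarrow> 'a poly" where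
  "Qp m v \<mu> a = (\<Prod>k\<in>{1..<2^\<mu>}. [:- (a + omega m v k), 1:])"

definition cprod :: "nat \<Rightarrow> (nat \<Rightarrow> 'a::field) \<Rightarrow> nat \<Rightarrow> 'a" where
  "cprod m v i = (\<Prod>k\<in>{1..<2^i}. omega m v k)"

lemma smult_sum_right:
  fixes f :: "'b \<Rightarrow> 'a::comm_semiring_0 poly" and A :: "'b set" and c :: 'a
  shows "smult c (sum f A) = sum (\<lambda>i. smult c (f i)) A"
  by (induction A rule: infinite_finite_induct) (simp_all add: smult_add_right)

lemma few_roots:
  fixes D :: "'a::field poly"
  assumes "\<forall>k\<ge>n. coeff D k = 0" "inj_on f {..<n}" "\<forall>k<n. poly D (f k) = 0"
  shows "D = 0"
proof (rule ccontr)
  assume D: "D \<noteq> 0"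
  have "coeff D (degree D) \<noteq> 0" using D by simp
  hence dl: "degree D < n" using assms(1) by (meson not_less)
  have "f ` {..<n} \<subseteq> {x. poly D x = 0}" using assms(3) by auto
  moreover have "finite {x. poly D x = 0}" using D poly_roots_finite by blast
  ultimately have "card (f ` {..<n}) \<le> card {x. poly D x = 0}" by (rule card_mono[rotated])
  also have "\<dots> \<le> degree D" using D by (rule card_poly_roots_bound)
  finally show False using dl card_image[OF assms(2)] by simp
qed

lemma lin_prod_deg:
  fixes f :: "nat \<Rightarrow> 'a::field"
  assumes "finite A"
  shows "degree (\<Prod>k\<in>A. [:- f k, 1:]) = card A"
  using assms by (simp_all add: degree_prod_eq_sum_degree)

lemma lin_prod_lead:
  fixes f :: "nat \<Rightarrow> 'a::field"
  shows "lead_coeff (\<Prod>k\<in>A. [:- f k, 1:]) = 1"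
  by (subst lead_coeff_prod) simp



context
  fixes m :: nat and v :: "nat \<Rightarrow> 'a::{field,finite}"
  assumes card: "card (UNIV :: 'a set) = 2 ^ m" and basis: "is_F2_basis m v"
begin

lemma two_zero: "(2::'a) = 0"
proof -
  have inj: "inj (\<lambda>x::'a. x + 1)" by (rule injI) simp
  have im: "(\<lambda>x::'a. x + 1) ` UNIV = UNIV"
    by (auto simp: image_iff)
  have "(\<Sum>x\<in>UNIV. x::'a) = sum (\<lambda>x. x) ((\<lambda>x::'a. x + 1) ` UNIV)" by (simp only: im)
  also have "\<dots> = sum ((\<lambda>x. x) \<circ> (\<lambda>x::'a. x + 1)) UNIV" by (rule sum.reindex[OF inj])
  also have "\<dots> = (\<Sum>x\<in>UNIV. x + 1)" by (simp only: comp_def)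
  also have "\<dots> = (\<Sum>x\<in>UNIV. x::'a) + of_nat (card (UNIV::'a set))" by (simp add: sum.distrib)
  finally have "of_nat (card (UNIV::'a set)) = (0::'a)" by simp
  hence "(2::'a) ^ m = 0" using card by simp
  thus ?thesis by simp
qed

lemma neg_eq: "- (x::'a) = x"
proof -
  have "x + x = 2 * x" by simp
  also have "\<dots> = 0" by (simp add: two_zero)
  finally show ?thesis by (simp add: eq_neg_iff_add_eq_0)
qed

lemma diff_eq_add: "(x::'a) - y = x + y"
  by (metis neg_eq diff_conv_add_uminus)

lemma om_inj: "inj_on (omega m v) {..<2^m}"
  using basis unfolding is_F2_basis_def by (rule bij_betw_imp_inj_on)

lemma om_surj: "omega m v ` {..<2^m} = UNIV"
  using basis unfolding is_F2_basis_def by (rule bij_betw_imp_surj_on)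

lemma om_eq: "j < 2^m \<Longrightarrow> k < 2^m \<Longrightarrow> omega m v j = omega m v k \<longleftrightarrow> j = k"
  using om_inj by (auto dest: inj_onD)

lemma om_inj_le: "\<tau> \<le> m \<Longrightarrow> inj_on (\<lambda>j. omega m v j + b) {..<2^\<tau>}"
proof (rule inj_onI)
  fix x y assume a: "\<tau> \<le> m" "x \<in> {..<2^\<tau>}" "y \<in> {..<2^\<tau>}" "omega m v x + b = omega m v y + b"
  have "(2::nat)^\<tau> \<le> 2^m" using a(1) by (rule power_increasing) simp
  moreover have "x < 2^\<tau>" "y < 2^\<tau>" using a(2,3) by auto
  ultimately have "x < 2^m" "y < 2^m" by (auto intro: order.strict_trans2)
  thus "x = y" using a(4) om_eq by auto
qed

lemma s_poly_eval: "poly (s_poly m v i) x = (\<Prod>j<2^i. x - omega m v j)"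
  by (simp add: s_poly_def poly_prod)

lemma s_Suc: "i < m \<Longrightarrow> poly (s_poly m v (Suc i)) x = poly (s_poly m v i) x * poly (s_poly m v i) (x + v i)"
proof -
  assume i: "i < m"
  have "poly (s_poly m v (Suc i)) x = (\<Prod>j<2^i + 2^i. x - omega m v j)"
    by (simp add: s_poly_eval mult_2)
  also have "\<dots> = poly (s_poly m v i) x * (\<Prod>j<2^i. x - omega m v (2^i + j))"
    by (simp add: prod_split_add s_poly_eval)
  also have "(\<Prod>j<2^i. x - omega m v (2^i + j)) = (\<Prod>j<2^i. (x + v i) - omega m v j)"
  proof (rule prod.cong)
    fix j assume "j \<in> {..<(2::nat)^i}"
    hence "omega m v (2^i + j) = v i + omega m v j" using omega_pow[OF i] by simp
    thus "x - omega m v (2^i + j) = (x + v i) - omega m v j" by (simp add: diff_eq_add add.assoc)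
  qed simp
  finally show ?thesis by (simp add: s_poly_eval)
qed

lemma s_root: "k < 2^i \<Longrightarrow> poly (s_poly m v i) (omega m v k) = 0"
  by (auto simp: s_poly_eval)

lemma s_add: "i \<le> m \<Longrightarrow> poly (s_poly m v i) (x + y) = poly (s_poly m v i) x + poly (s_poly m v i) y"
proof (induction i arbitrary: x y)
  case 0
  then show ?case by (simp add: s_poly_eval omega_0)
next
  case (Suc i)
  hence i: "i < m" by simp
  let ?S = "\<lambda>z. poly (s_poly m v i) z"
  have IH: "\<And>x y. ?S (x + y) = ?S x + ?S y" using Suc by simp
  have e: "poly (s_poly m v (Suc i)) z = ?S z * (?S z + ?S (v i))" for z
    using s_Suc[OF i] IH by simp
  have "(a + b) * (a + b + c) = a * (a + c) + b * (b + c) + 2 * (a * b)" for a b c :: 'a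
    by (simp add: algebra_simps)
  then show ?case by (simp add: e IH two_zero)
qed

lemma s_deg: "degree (s_poly m v i) = 2^i"
  unfolding s_poly_def by (simp add: lin_prod_deg)

lemma s_lead: "lead_coeff (s_poly m v i) = 1"
  unfolding s_poly_def by (rule lin_prod_lead)

lemma s_nz: "s_poly m v i \<noteq> 0"
  using s_lead[of i] by auto

lemma set_ins0: "0 < n \<Longrightarrow> {..<n} = insert 0 {1..<(n::nat)}"
  by auto

lemma s_factor:
  assumes mu: "\<mu> \<le> m"
  shows "s_poly m v \<mu> - [:poly (s_poly m v \<mu>) a:] = [:-a,1:] * Qp m v \<mu> a"
proof -
  define R where "R = (\<Prod>k<2^\<mu>. [:-(a + omega m v k),1:])"
  have R: "R = [:-a,1:] * Qp m v \<mu> a"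
    unfolding R_def Qp_def by (subst set_ins0) (simp_all add: omega_0)
  define D where "D = s_poly m v \<mu> - [:poly (s_poly m v \<mu>) a:] - R"
  have degR: "degree R = 2^\<mu>" unfolding R_def
    using lin_prod_deg[of "{..<2^\<mu>}" "\<lambda>k. a + omega m v k"] by simp
  have leadR: "lead_coeff R = 1" unfolding R_def by (rule lin_prod_lead)
  have c: "\<forall>k\<ge>2^\<mu>. coeff D k = 0"
  proof (intro allI impI)
    fix k :: nat assume k: "2^\<mu> \<le> k"
    have k0: "0 < k" using k by (rule order.strict_trans2[rotated]) simp
    show "coeff D k = 0"
    proof (cases "k = 2^\<mu>")
      case True
      have "coeff (s_poly m v \<mu>) k = 1" using s_lead[of \<mu>] s_deg[of \<mu>] True by simp
      moreover have "coeff R k = 1" using leadR degR True by simp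
      ultimately show ?thesis unfolding D_def using coeff_const_pos[OF k0] by simp
    next
      case False
      hence k': "2^\<mu> < k" using k by simp
      have "coeff (s_poly m v \<mu>) k = 0" using k' s_deg[of \<mu>] by (intro coeff_eq_0) simp
      moreover have "coeff R k = 0" using k' degR by (intro coeff_eq_0) simp
      ultimately show ?thesis unfolding D_def using coeff_const_pos[OF k0] by simp
    qed
  qed
  have r: "\<forall>j<2^\<mu>. poly D (omega m v j + a) = 0"
  proof (intro allI impI)
    fix j :: nat assume j: "j < 2^\<mu>"
    have "poly (s_poly m v \<mu>) (omega m v j + a) = poly (s_poly m v \<mu>) a"
      using s_add[OF mu] s_root[OF j] by simp
    moreover have "poly R (omega m v j + a) = 0"
      unfolding R_def poly_prod using j by (auto simp: add.commute)
    ultimately show "poly D (omega m v j + a) = 0" unfolding D_def by simp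
  qed
  have "D = 0" using c om_inj_le[OF mu] r by (rule few_roots)
  thus ?thesis unfolding D_def R by simp
qed

lemma Q_div: "\<mu> \<le> m \<Longrightarrow>
  (s_poly m v \<mu> - [:poly (s_poly m v \<mu>) a:]) div [:-a,1:] = Qp m v \<mu> a"
  unfolding s_factor by (rule nonzero_mult_div_cancel_left) simp

lemma Q_same: "poly (Qp m v \<mu> a) a = cprod m v \<mu>"
  unfolding Qp_def cprod_def poly_prod
proof (rule prod.cong)
  fix k
  have "a - (a + omega m v k) = - omega m v k" by simp
  also have "\<dots> = omega m v k" by (rule neg_eq)
  finally show "poly [:- (a + omega m v k), 1:] a = omega m v k" by simp
qed simp

lemma Q_other:
  assumes "\<mu> \<le> m" "x \<noteq> a" "poly (s_poly m v \<mu>) x = poly (s_poly m v \<mu>) a"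
  shows "poly (Qp m v \<mu> a) x = 0"
proof -
  have "poly (s_poly m v \<mu> - [:poly (s_poly m v \<mu>) a:]) x = poly ([:-a,1:] * Qp m v \<mu> a) x"
    using s_factor[OF assms(1)] by simp
  hence "poly (Qp m v \<mu> a) x = 0 \<or> a = x" using assms(3) by (simp add: algebra_simps)
  thus ?thesis using assms(2) by blast
qed

lemma Q_coeff: "2^\<mu> \<le> k \<Longrightarrow> coeff (Qp m v \<mu> a) k = 0"
proof -
  assume k: "2^\<mu> \<le> k"
  have "degree (Qp m v \<mu> a) = 2^\<mu> - 1" unfolding Qp_def
    using lin_prod_deg[of "{1..<2^\<mu>}" "\<lambda>k. a + omega m v k"] by simp
  moreover have "(2::nat)^\<mu> - 1 < k" using k by (simp add: less_le_trans[of _ "2^\<mu>"])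
  ultimately show ?thesis by (intro coeff_eq_0) simp
qed

lemma S_eval_plus: "poly (s_poly m v i) y = (\<Prod>j<2^i. y + omega m v j)"
  unfolding s_poly_eval by (simp add: diff_eq_add)

lemma cprod_rec: "i < m \<Longrightarrow> cprod m v (Suc i) = cprod m v i * poly (s_poly m v i) (v i)"
proof -
  assume i: "i < m"
  have "cprod m v (Suc i) = prod (omega m v) {1..<2^i} * prod (omega m v) {2^i..<2^i + 2^i}"
    unfolding cprod_def by (subst prod.atLeastLessThan_concat) (simp_all add: mult_2)
  also have "prod (omega m v) {2^i..<2^i + 2^i} = (\<Prod>j<2^i. omega m v (2^i + j))"
    by (rule prod_ivl_shift)
  also have "\<dots> = (\<Prod>j<2^i. v i + omega m v j)"
    by (rule prod.cong) (simp_all add: omega_pow[OF i])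
  finally show ?thesis unfolding cprod_def S_eval_plus .
qed

lemma cprod_prod: "i \<le> m \<Longrightarrow> cprod m v i = (\<Prod>t<i. poly (s_poly m v t) (v t))"
proof (induction i)
  case 0 then show ?case by (simp add: cprod_def)
next
  case (Suc i)
  then show ?case by (simp add: cprod_rec)
qed

lemma wilson2: "(\<Prod>x\<in>UNIV - {0}. x) = (1::'a)"
proof -
  define A where "A = (UNIV - {0::'a})"
  define P where "P = (\<Prod>x\<in>A. x)"
  have inj: "inj_on inverse A" by (rule inj_onI) (simp add: A_def)
  have im: "inverse ` A = A"
  proof
    show "inverse ` A \<subseteq> A" by (auto simp: A_def)
    show "A \<subseteq> inverse ` A"
    proof
      fix x assume "x \<in> A"
      hence "inverse x \<in> A" "x = inverse (inverse x)" by (simp_all add: A_def)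
      thus "x \<in> inverse ` A" by (rule rev_image_eqI)
    qed
  qed
  have "P = prod (\<lambda>x. x) (inverse ` A)" unfolding P_def im ..
  also have "\<dots> = prod ((\<lambda>x. x) \<circ> inverse) A" by (rule prod.reindex[OF inj])
  finally have Pi: "P = prod inverse A" by (simp add: comp_def)
  have "P * P = prod (\<lambda>x. x) A * prod inverse A" using Pi unfolding P_def by simp
  also have "\<dots> = prod (\<lambda>x. x * inverse x) A" by (rule prod.distrib[symmetric])
  also have "\<dots> = 1" by (rule prod.neutral) (simp add: A_def)
  finally have PP: "P * P = 1" .
  have "(P + 1) * (P + 1) = P * P + 2 * P + 1" by (simp add: algebra_simps)
  also have "\<dots> = 2" using PP by (simp add: two_zero)
  also have "\<dots> = 0" by (rule two_zero)
  finally have "P + 1 = 0" by simp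
  hence "P = - 1" by (simp add: eq_neg_iff_add_eq_0)
  also have "\<dots> = 1" by (rule neg_eq)
  finally show ?thesis unfolding P_def A_def .
qed

lemma cprod_m: "cprod m v m = 1"
proof -
  have n0: "(0::nat) < 2^m" by simp
  have inj: "inj_on (omega m v) {1..<2^m}" using om_inj by (rule inj_on_subset) auto
  have "UNIV = omega m v ` {..<2^m}" using om_surj by simp
  also have "\<dots> = insert 0 (omega m v ` {1..<2^m})" by (simp add: set_ins0[OF n0] omega_0)
  finally have U: "UNIV = insert 0 (omega m v ` {1..<2^m})" .
  have "0 \<notin> omega m v ` {1..<2^m}"
  proof
    assume "0 \<in> omega m v ` {1..<2^m}"
    then obtain k where k: "k \<in> {1..<2^m}" "0 = omega m v k" by (rule imageE)
    hence "omega m v k = omega m v 0" by (simp add: omega_0)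
    moreover have "k < 2^m" using k by simp
    ultimately have "k = 0" using om_eq[of k 0] n0 by simp
    thus False using k by simp
  qed
  have "UNIV - {0} = insert 0 (omega m v ` {1..<2^m}) - {0}" using U by simp
  also have "\<dots> = omega m v ` {1..<2^m}" using \<open>0 \<notin> omega m v ` {1..<2^m}\<close> by simp
  finally have im: "omega m v ` {1..<2^m} = UNIV - {0}" by simp
  have "cprod m v m = prod (\<lambda>x. x) (omega m v ` {1..<2^m})"
    unfolding cprod_def prod.reindex[OF inj] by (simp add: comp_def)
  also have "\<dots> = 1" unfolding im by (rule wilson2)
  finally show ?thesis .
qed

lemma S_nz: "i < m \<Longrightarrow> poly (s_poly m v i) (v i) \<noteq> 0"
proof
  assume i: "i < m" and z: "poly (s_poly m v i) (v i) = 0"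
  have v: "v i = omega m v (2^i)" using omega_pow[of i m 0 v] i by (simp add: omega_0)
  have pm: "(2::nat)^i < 2^m" using i by simp
  from z obtain j where j: "j < 2^i" "v i - omega m v j = 0" unfolding s_poly_eval by auto
  hence "omega m v (2^i) = omega m v j" using v by simp
  moreover have "j < 2^m" using j(1) pm by (rule order.strict_trans)
  ultimately have "2^i = j" using om_eq[of "2^i" j] pm by simp
  thus False using j(1) by simp
qed

lemma p_block: "\<mu> \<le> m \<Longrightarrow> p_const m v (2^m - 2^\<mu>) = (\<Prod>t\<in>{\<mu>..<m}. poly (s_poly m v t) (v t))"
proof -
  assume mu: "\<mu> \<le> m"
  have "p_const m v (2^m - 2^\<mu>) = (\<Prod>t<m. if \<mu> \<le> t then poly (s_poly m v t) (v t) else 1)"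
    unfolding p_const_def by (rule prod.cong) (simp_all add: bitdig_block[OF mu])
  also have "\<dots> = (\<Prod>t\<in>{t\<in>{..<m}. \<mu> \<le> t}. poly (s_poly m v t) (v t))"
    by (rule prod.inter_filter[symmetric]) simp
  also have "{t\<in>{..<m}. \<mu> \<le> t} = {\<mu>..<m}" by auto
  finally show ?thesis .
qed

lemma cp_p: "\<mu> \<le> m \<Longrightarrow> cprod m v \<mu> * p_const m v (2^m - 2^\<mu>) = 1"
proof -
  assume mu: "\<mu> \<le> m"
  have "cprod m v \<mu> * p_const m v (2^m - 2^\<mu>) =
        prod (\<lambda>t. poly (s_poly m v t) (v t)) {0..<\<mu>} * prod (\<lambda>t. poly (s_poly m v t) (v t)) {\<mu>..<m}"
    by (simp add: cprod_prod[OF mu] p_block[OF mu] atLeast0LessThan)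
  also have "\<dots> = prod (\<lambda>t. poly (s_poly m v t) (v t)) {0..<m}"
    by (rule prod.atLeastLessThan_concat) (simp_all add: mu)
  also have "\<dots> = cprod m v m" by (simp add: cprod_prod atLeast0LessThan)
  also have "\<dots> = 1" by (rule cprod_m)
  finally show ?thesis .
qed

lemma p_nz: "p_const m v j \<noteq> 0"
  unfolding p_const_def using S_nz by (simp add: prod_zero_iff)

lemma X_deg: "j < 2^m \<Longrightarrow> degree (X_poly m v j) = j"
proof -
  assume j: "j < 2^m"
  have "degree (X_poly m v j) = (\<Sum>i<m. degree (s_poly m v i ^ bitdig j i))"
    unfolding X_poly_def by (rule degree_prod_eq_sum_degree) (simp add: s_nz)
  also have "\<dots> = (\<Sum>i<m. bitdig j i * 2^i)"
    by (rule sum.cong) (simp_all add: degree_power_eq s_nz s_deg)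
  also have "\<dots> = j" using j by (simp add: bitdig_sum)
  finally show ?thesis .
qed

lemma X_nz: "X_poly m v j \<noteq> 0"
  unfolding X_poly_def using s_nz by (simp add: prod_zero_iff)

lemma Xbar_deg: "j < 2^m \<Longrightarrow> degree (Xbar m v j) = j"
  unfolding Xbar_def using p_nz X_deg by simp

lemma Xbar_lead: "j < 2^m \<Longrightarrow> coeff (Xbar m v j) j \<noteq> 0"
proof -
  assume j: "j < 2^m"
  have "Xbar m v j \<noteq> 0" unfolding Xbar_def using p_nz X_nz by simp
  hence "lead_coeff (Xbar m v j) \<noteq> 0" by simp
  thus ?thesis using Xbar_deg[OF j] by simp
qed

lemma Xbar_hi: "j < 2^m \<Longrightarrow> j < k \<Longrightarrow> coeff (Xbar m v j) k = 0"
  by (intro coeff_eq_0) (simp add: Xbar_deg)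

lemma lin_indep: "n \<le> 2^m \<Longrightarrow> (\<Sum>i<n. smult (g i) (Xbar m v i)) = 0 \<Longrightarrow> \<forall>i<n. g i = 0"
proof (induction n)
  case 0 then show ?case by simp
next
  case (Suc n)
  have nm: "n < 2^m" using Suc.prems(1) by simp
  have z: "(\<Sum>i<n. smult (g i) (Xbar m v i)) + smult (g n) (Xbar m v n) = 0"
    using Suc.prems(2) by simp
  have c0: "coeff (\<Sum>i<n. smult (g i) (Xbar m v i)) n = 0"
    unfolding coeff_sum using nm by (intro sum.neutral) (simp add: Xbar_hi)
  have "coeff ((\<Sum>i<n. smult (g i) (Xbar m v i)) + smult (g n) (Xbar m v n)) n = 0"
    using z by simp
  hence "g n * coeff (Xbar m v n) n = 0" using c0 by simp
  hence gn: "g n = 0" using Xbar_lead[OF nm] by simp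
  hence "(\<Sum>i<n. smult (g i) (Xbar m v i)) = 0" using z by simp
  hence "\<forall>i<n. g i = 0" using Suc.IH nm by simp
  show ?case
  proof (intro allI impI)
    fix i assume "i < Suc n"
    thus "g i = 0" using gn \<open>\<forall>i<n. g i = 0\<close> by (cases "i = n") simp_all
  qed
qed

lemma expand: "n \<le> 2^m \<Longrightarrow> \<forall>k\<ge>n. coeff q k = 0 \<Longrightarrow>
  \<exists>g. (\<forall>j\<ge>n. g j = 0) \<and> q = (\<Sum>i<n. smult (g i) (Xbar m v i))"
proof (induction n arbitrary: q)
  case 0
  hence "q = 0" by (intro poly_eqI) simp
  thus ?case by (intro exI[of _ "\<lambda>_. 0"]) simp
next
  case (Suc n)
  have nm: "n < 2^m" using Suc.prems(1) by simp
  define a where "a = coeff q n / coeff (Xbar m v n) n"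
  define q' where "q' = q - smult a (Xbar m v n)"
  have "\<forall>k\<ge>n. coeff q' k = 0"
  proof (intro allI impI)
    fix k assume k: "n \<le> k"
    show "coeff q' k = 0"
    proof (cases "k = n")
      case True
      thus ?thesis unfolding q'_def a_def using Xbar_lead[OF nm] by simp
    next
      case False
      hence "n < k" using k by simp
      thus ?thesis unfolding q'_def using Suc.prems(2) Xbar_hi[OF nm] by simp
    qed
  qed
  hence "\<exists>g. (\<forall>j\<ge>n. g j = 0) \<and> q' = (\<Sum>i<n. smult (g i) (Xbar m v i))"
    using Suc.IH[of q'] nm by simp
  then obtain g where g: "\<forall>j\<ge>n. g j = 0" "q' = (\<Sum>i<n. smult (g i) (Xbar m v i))"
    by (elim exE conjE)
  have "(\<Sum>i<Suc n. smult ((g(n := a)) i) (Xbar m v i)) =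
        (\<Sum>i<n. smult (g i) (Xbar m v i)) + smult a (Xbar m v n)"
    by simp
  also have "\<dots> = q"
  proof -
    have "q' + smult a (Xbar m v n) = q" unfolding q'_def by simp
    thus ?thesis using g(2) by simp
  qed
  finally show ?case using g(1) by (intro exI[of _ "g(n := a)"]) auto
qed

lemma IFFT_eq:
  assumes tau: "\<tau> \<le> m" and g0: "\<forall>j\<ge>2^\<tau>. g j = 0"
    and F: "\<forall>j<2^\<tau>. F j = poly (\<Sum>i<2^\<tau>. smult (g i) (Xbar m v i)) (omega m v j + \<beta>)"
  shows "IFFT m v F \<tau> \<beta> = g"
  unfolding IFFT_def
proof (rule the_equality)
  show "(\<forall>j\<ge>2 ^ \<tau>. g j = 0) \<and>
    (\<forall>j<2 ^ \<tau>. poly (\<Sum>i<2 ^ \<tau>. smult (g i) (Xbar m v i)) (omega m v j + \<beta>) = F j)"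
    using g0 F by simp
next
  fix g' assume g': "(\<forall>j\<ge>2 ^ \<tau>. g' j = 0) \<and>
    (\<forall>j<2 ^ \<tau>. poly (\<Sum>i<2 ^ \<tau>. smult (g' i) (Xbar m v i)) (omega m v j + \<beta>) = F j)"
  have tm: "(2::nat)^\<tau> \<le> 2^m" using tau by simp
  define D where "D = (\<Sum>i<2^\<tau>. smult (g' i - g i) (Xbar m v i))"
  have D: "D = (\<Sum>i<2^\<tau>. smult (g' i) (Xbar m v i)) - (\<Sum>i<2^\<tau>. smult (g i) (Xbar m v i))"
    unfolding D_def by (simp add: smult_diff_left sum_subtractf)
  have c: "\<forall>k\<ge>2^\<tau>. coeff D k = 0"
  proof (intro allI impI)
    fix k :: nat assume k: "2^\<tau> \<le> k"
    show "coeff D k = 0" unfolding D_def coeff_sum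
    proof (rule sum.neutral, rule ballI)
      fix i assume "i \<in> {..<(2::nat)^\<tau>}"
      hence i1: "i < 2^\<tau>" by simp
      hence "i < 2^m" by (rule order.strict_trans2[OF _ tm])
      moreover have "i < k" using i1 k by (rule order.strict_trans2)
      ultimately show "coeff (smult (g' i - g i) (Xbar m v i)) k = 0" by (simp add: Xbar_hi)
    qed
  qed
  have r: "\<forall>j<2^\<tau>. poly D (omega m v j + \<beta>) = 0" using g' F unfolding D by simp
  have "D = 0" using c om_inj_le[OF tau] r by (rule few_roots)
  hence gg: "\<forall>i<2^\<tau>. g' i - g i = 0" using lin_indep[OF tm, of "\<lambda>i. g' i - g i"] unfolding D_def by simp
  show "g' = g"
  proof (rule ext)
    fix j show "g' j = g j"
    proof (cases "j < 2^\<tau>")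
      case True thus ?thesis using gg by simp
    next
      case False thus ?thesis using g' g0 by simp
    qed
  qed
qed

end


theorem lemma4:
  fixes m \<mu> :: nat and v :: "nat \<Rightarrow> 'a::{field,finite}" and r :: "nat \<Rightarrow> 'a"
  assumes card: "card (UNIV :: 'a set) = 2 ^ m"
    and basis: "is_F2_basis m v"
    and mu: "\<mu> \<le> m"
  shows "(\<Sum>j<2 ^ m. smult (r j)
            ((s_poly m v \<mu> - [:poly (s_poly m v \<mu>) (omega m v j):]) div [:- omega m v j, 1:]))
       = (\<Sum>j<2 ^ \<mu>. smult
            (inverse (p_const m v (2 ^ m - 2 ^ \<mu>)) *
             (\<Sum>l<2 ^ (m - \<mu>). IFFT m v (\<lambda>i. r (l * 2 ^ \<mu> + i)) \<mu> (omega m v (2 ^ \<mu> * l)) j))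
            (Xbar m v j))"
proof -
  have mm: "(2::nat)^\<mu> \<le> 2^m" using mu by simp
  define N where "N = (2::nat)^(m - \<mu>)"
  define c where "c = cprod m v \<mu>"
  define p where "p = p_const m v (2^m - 2^\<mu>)"
  have cp: "c * p = 1" unfolding c_def p_def by (rule cp_p[OF card basis mu])
  have ip: "inverse p = c" using cp by (intro inverse_unique) (simp add: mult.commute)
  have c0: "c \<noteq> 0" using cp by auto
  define I where "I l = IFFT m v (\<lambda>i. r (l * 2 ^ \<mu> + i)) \<mu> (omega m v (2 ^ \<mu> * l))" for l
  define G where "G l = (\<Sum>i<2^\<mu>. smult (r (l * 2^\<mu> + i)) (Qp m v \<mu> (omega m v (2^\<mu> * l) + omega m v i)))" for l
  have L: "(\<Sum>j<2 ^ m. smult (r j)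
            ((s_poly m v \<mu> - [:poly (s_poly m v \<mu>) (omega m v j):]) div [:- omega m v j, 1:]))
        = (\<Sum>j<2 ^ m. smult (r j) (Qp m v \<mu> (omega m v j)))"
    by (rule sum.cong) (simp_all add: Q_div[OF card basis mu])
  also have "\<dots> = (\<Sum>j<N * 2^\<mu>. smult (r j) (Qp m v \<mu> (omega m v j)))"
    unfolding N_def using mu by (simp add: power_add[symmetric])
  also have "\<dots> = (\<Sum>l<N. \<Sum>j\<in>{l * 2^\<mu>..<l * 2^\<mu> + 2^\<mu>}. smult (r j) (Qp m v \<mu> (omega m v j)))"
    by (rule sum.nat_group[symmetric])
  also have "\<dots> = (\<Sum>l<N. G l)"
  proof (rule sum.cong)
    fix l
    show "(\<Sum>j\<in>{l * 2^\<mu>..<l * 2^\<mu> + 2^\<mu>}. smult (r j) (Qp m v \<mu> (omega m v j))) = G l"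
      unfolding sum_ivl_shift G_def by (rule sum.cong) (simp_all add: omega_add)
  qed simp
  finally have L: "(\<Sum>j<2 ^ m. smult (r j)
            ((s_poly m v \<mu> - [:poly (s_poly m v \<mu>) (omega m v j):]) div [:- omega m v j, 1:]))
        = (\<Sum>l<N. G l)" .
  have K: "G l = smult c (\<Sum>j<2^\<mu>. smult (I l j) (Xbar m v j))" for l
  proof -
    define \<beta> where "\<beta> = omega m v (2^\<mu> * l)"
    have val: "poly (G l) (omega m v k + \<beta>) = r (l * 2^\<mu> + k) * c" if k: "k < 2^\<mu>" for k
    proof -
      have km: "k < 2^m" using k mm by (rule order.strict_trans2)
      have t: "poly (Qp m v \<mu> (\<beta> + omega m v i)) (omega m v k + \<beta>) = (if i = k then c else 0)"
        if i: "i < 2^\<mu>" for i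
      proof (cases "i = k")
        case True
        thus ?thesis unfolding c_def using Q_same[OF card basis] by (simp add: add.commute)
      next
        case False
        have im: "i < 2^m" using i mm by (rule order.strict_trans2)
        have ne: "omega m v k + \<beta> \<noteq> \<beta> + omega m v i"
          using False om_eq[OF card basis km im] by (simp add: add.commute)
        have "poly (s_poly m v \<mu>) (omega m v k + \<beta>) = poly (s_poly m v \<mu>) \<beta>"
          using s_add[OF card basis mu] s_root[OF card basis k] by simp
        moreover have "poly (s_poly m v \<mu>) (\<beta> + omega m v i) = poly (s_poly m v \<mu>) \<beta>"
          using s_add[OF card basis mu] s_root[OF card basis i] by simp
        ultimately have "poly (Qp m v \<mu> (\<beta> + omega m v i)) (omega m v k + \<beta>) = 0"
          using Q_other[OF card basis mu ne] by simp
        thus ?thesis using False by simp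
      qed
      have "poly (G l) (omega m v k + \<beta>) =
            (\<Sum>i<2^\<mu>. r (l * 2^\<mu> + i) * (if i = k then c else 0))"
        unfolding G_def poly_sum \<beta>_def[symmetric] by (rule sum.cong) (simp_all add: t)
      also have "\<dots> = (\<Sum>i<2^\<mu>. if i = k then r (l * 2^\<mu> + i) * c else 0)"
        by (rule sum.cong) simp_all
      also have "\<dots> = r (l * 2^\<mu> + k) * c" using k by simp
      finally show ?thesis .
    qed
    define q where "q = smult (inverse c) (G l)"
    have qc: "\<forall>k\<ge>2^\<mu>. coeff q k = 0"
      unfolding q_def G_def by (simp add: coeff_sum Q_coeff[OF card basis])
    obtain g where g: "\<forall>j\<ge>2^\<mu>. g j = 0" "q = (\<Sum>i<2^\<mu>. smult (g i) (Xbar m v i))"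
      using expand[OF card basis mm qc] by (elim exE conjE)
    have "I l = g" unfolding I_def
    proof (rule IFFT_eq[OF card basis mu g(1)])
      show "\<forall>j<2 ^ \<mu>. r (l * 2 ^ \<mu> + j) = poly (\<Sum>i<2 ^ \<mu>. smult (g i) (Xbar m v i)) (omega m v j + omega m v (2 ^ \<mu> * l))"
      proof (intro allI impI)
        fix j :: nat assume j: "j < 2^\<mu>"
        have "poly q (omega m v j + \<beta>) = inverse c * (r (l * 2^\<mu> + j) * c)"
          unfolding q_def using val[OF j] by simp
        also have "\<dots> = r (l * 2^\<mu> + j)" using c0 by simp
        finally show "r (l * 2 ^ \<mu> + j) = poly (\<Sum>i<2 ^ \<mu>. smult (g i) (Xbar m v i)) (omega m v j + omega m v (2 ^ \<mu> * l))"
          using g(2) unfolding \<beta>_def by simp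
      qed
    qed
    hence "(\<Sum>j<2^\<mu>. smult (I l j) (Xbar m v j)) = q" using g(2) by simp
    thus ?thesis unfolding q_def using c0 by simp
  qed
  have "(\<Sum>j<2 ^ \<mu>. smult (inverse p * (\<Sum>l<N. I l j)) (Xbar m v j))
      = (\<Sum>j<2 ^ \<mu>. \<Sum>l<N. smult c (smult (I l j) (Xbar m v j)))"
    by (rule sum.cong) (simp_all add: ip sum_distrib_left smult_sum)
  also have "\<dots> = (\<Sum>l<N. \<Sum>j<2 ^ \<mu>. smult c (smult (I l j) (Xbar m v j)))"
    by (rule sum.swap)
  also have "\<dots> = (\<Sum>l<N. G l)"
    by (rule sum.cong) (simp_all add: K smult_sum_right)
  finally show ?thesis unfolding L I_def N_def p_def by simp
qed


end
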